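(* Let $C^1$ and $C^2$ be two compact sets in $(\mathbb{R}^d,\operatorname{dist})$, generated by systems of balls $\{S_I^1\}_I$ and $\{S_L^2\}_L$ respectively, and fix $r\in(0,\tfrac12)$. Assume: (i) $\tau(C^1,\{S_I^1\}_I)\,\tau(C^2,\{S_L^2\}_L)\ge \frac{1}{(1-2r)^2}$; (ii) $C^1\cap (1-2r)S^2_\emptyset\neq\emptyset$; (iii) $\operatorname{rad}(S^1_\emptyset)\ge r\operatorname{rad}(S^2_\emptyset)$ and $\operatorname{rad}(S^2_\emptyset)\ge r\operatorname{rad}(S^1_\emptyset)$; (iv) $\{S_I^1\}_I$ and $\{S_L^2\}_L$ are both $r$-uniformly dense. Then $C^1\cap C^2\neq\emptyset$.
   Context: $\mathbb{R}^d$ is equipped with a distance $\operatorname{dist}$ induced by a norm; all balls are closed balls for this distance; $\operatorname{rad}(B)$ is the radius of a ball $B$, and for $a>0$, $aB$ is the ball with the same center as $B$ and radius $a\operatorname{rad}(B)$. A word $I$ is a finite sequence of natural numbers, $\ell(I)$ its length, $\emptyset$ the empty word. A system of balls for a compact set $C\subseteq\mathbb{R}^d$ is a family $\{S_I\}_I$ of closed balls indexed by words such that each $S_I$ contains its finitely many children $S_{I,j}$, $1\le j\le k_I$ (no separation assumed), $C=\bigcap_{n\ge0}\bigcup_{\ell(I)=n}S_I$, and for every infinite sequence of indices $i_1,i_2,\dots$ of the construction, $\operatorname{rad}(S_{i_1\cdots i_n})\to0$. For each word $I$ set $h_I:=\max_{x\in S_I}\operatorname{dist}(x,C)$. The thickness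 of $C$ associated to the system is $\tau(C,\{S_I\}_I):=\inf_{n\ge0}\inf_{\ell(I)=n}\frac{\min_i\operatorname{rad}(S_{I,i})}{h_I}$. The system $\{S_I\}_I$ is $r$-uniformly dense if for every word $I$ and every ball $B\subseteq S_I$ with $\operatorname{rad}(B)\ge r\operatorname{rad}(S_I)$ there is a child $S_{I,i}\subseteq B$. *)

theory Defs
  imports "HOL-Analysis.Analysis"
begin

text \<open>A norm N on a finite-dimensional real vector space (R^d), inducing dist x y = N (x - y).\<close>
definition is_norm :: "('a::euclidean_space \<Rightarrow> real) \<Rightarrow> bool" where
  "is_norm N \<longleftrightarrow> (\<forall>x y. N (x + y) \<le> N x + N y) \<and> (\<forall>a x. N (a *\<^sub>R x) = \<bar>a\<bar> * N x)
     \<and> (\<forall>x. N x = 0 \<longleftrightarrow> x = 0)"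

text \<open>A closed ball is represented by a pair (center, radius); nball N B is its point set.\<close>
definition nball :: "('a::euclidean_space \<Rightarrow> real) \<Rightarrow> 'a \<times> real \<Rightarrow> 'a set" where
  "nball N B = {x. N (x - fst B) \<le> snd B}"

definition rad :: "'a \<times> real \<Rightarrow> real" where "rad B = snd B"

definition ndist_set :: "('a::euclidean_space \<Rightarrow> real) \<Rightarrow> 'a \<Rightarrow> 'a set \<Rightarrow> real" where
  "ndist_set N x C = Inf ((\<lambda>y. N (x - y)) ` C)"

text \<open>Words: finite sequences of indices; the admissible words of the construction
  with k I children (indexed 1..k I) at each node I. Children of I are I @ [j].\<close>
definition valid_word :: "(nat list \<Rightarrow> nat) \<Rightarrow> nat list \<Rightarrow> bool" where
  "valid_word k I \<longleftrightarrow> (\<forall>n < length I. 1 \<le> I ! n \<and> I ! n \<le> k (take n I))"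

definition valid_seq :: "(nat list \<Rightarrow> nat) \<Rightarrow> (nat \<Rightarrow> nat) \<Rightarrow> bool" where
  "valid_seq k i \<longleftrightarrow> (\<forall>n. 1 \<le> i n \<and> i n \<le> k (map i [0..<n]))"

definition system_of_balls ::
  "('a::euclidean_space \<Rightarrow> real) \<Rightarrow> 'a set \<Rightarrow> (nat list \<Rightarrow> nat) \<Rightarrow> (nat list \<Rightarrow> 'a \<times> real) \<Rightarrow> bool" where
  "system_of_balls N C k S \<longleftrightarrow>
     (\<forall>I. valid_word k I \<longrightarrow> rad (S I) \<ge> 0 \<and> k I \<ge> 1
          \<and> (\<forall>j\<in>{1..k I}. nball N (S (I @ [j])) \<subseteq> nball N (S I)))
   \<and> C = (\<Inter>n. \<Union>I\<in>{I. valid_word k I \<and> length I = n}. nball N (S I))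
   \<and> (\<forall>i. valid_seq k i \<longrightarrow> (\<lambda>n. rad (S (map i [0..<n]))) \<longlonglongrightarrow> 0)"

definition hgt :: "('a::euclidean_space \<Rightarrow> real) \<Rightarrow> 'a set \<Rightarrow> ('a \<times> real) \<Rightarrow> real" where
  "hgt N C B = Sup ((\<lambda>x. ndist_set N x C) ` nball N B)"

definition min_child_rad :: "(nat list \<Rightarrow> nat) \<Rightarrow> (nat list \<Rightarrow> 'a \<times> real) \<Rightarrow> nat list \<Rightarrow> real" where
  "min_child_rad k S I = Min ((\<lambda>j. rad (S (I @ [j]))) ` {1..k I})"

definition thickness ::
  "('a::euclidean_space \<Rightarrow> real) \<Rightarrow> 'a set \<Rightarrow> (nat list \<Rightarrow> nat) \<Rightarrow> (nat list \<Rightarrow> 'a \<times> real) \<Rightarrow> ereal" where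
  "thickness N C k S = (INF I\<in>{I. valid_word k I}.
      (if hgt N C (S I) = 0 then \<infinity> else ereal (min_child_rad k S I / hgt N C (S I))))"

definition uniformly_dense ::
  "('a::euclidean_space \<Rightarrow> real) \<Rightarrow> real \<Rightarrow> (nat list \<Rightarrow> nat) \<Rightarrow> (nat list \<Rightarrow> 'a \<times> real) \<Rightarrow> bool" where
  "uniformly_dense N r k S \<longleftrightarrow>
     (\<forall>I B. valid_word k I \<and> rad B \<ge> 0 \<and> nball N B \<subseteq> nball N (S I) \<and> rad B \<ge> r * rad (S I)
        \<longrightarrow> (\<exists>j\<in>{1..k I}. nball N (S (I @ [j])) \<subseteq> nball N B))"

end

theory Submission
  imports Defs
begin

lemma nrm_zero: "is_norm N \<Longrightarrow> N 0 = 0"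
  unfolding is_norm_def by auto

lemma nrm_scale: "is_norm N \<Longrightarrow> N (a *\<^sub>R x) = \<bar>a\<bar> * N x"
  unfolding is_norm_def by auto

lemma nrm_tri: "is_norm N \<Longrightarrow> N (x + y) \<le> N x + N y"
  unfolding is_norm_def by auto

lemma nrm_neg: "is_norm N \<Longrightarrow> N (- x) = N x"
  using nrm_scale[of N "-1" x] by simp

lemma nrm_nonneg: "is_norm N \<Longrightarrow> N x \<ge> 0"
  using nrm_tri[of N x "-x"] nrm_neg[of N x] nrm_zero[of N] by simp

lemma nrm_sym: "is_norm N \<Longrightarrow> N (x - y) = N (y - x)"
  using nrm_neg[of N "x - y"] by simp

lemma nrm_tri3: "is_norm N \<Longrightarrow> N (x - z) \<le> N (x - y) + N (y - z)"
  using nrm_tri[of N "x - y" "y - z"] by simp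

lemma nrm_def0: "is_norm N \<Longrightarrow> N x = 0 \<longleftrightarrow> x = 0"
  unfolding is_norm_def by auto

lemma nrm_sum: "is_norm N \<Longrightarrow> N (sum f A) \<le> sum (\<lambda>a. N (f a)) A"
proof (induction A rule: infinite_finite_induct)
  case (infinite A) then show ?case by (simp add: nrm_zero)
next
  case empty then show ?case by (simp add: nrm_zero)
next
  case (insert x F)
  then show ?case using nrm_tri[of N "f x" "sum f F"] by simp
qed

lemma nrm_upper:
  fixes N :: "'a::euclidean_space \<Rightarrow> real"
  assumes "is_norm N"
  shows "\<exists>M\<ge>0. \<forall>x. N x \<le> M * norm x"
proof -
  define M where "M = (\<Sum>b\<in>Basis. N b)"
  have M0: "M \<ge> 0" unfolding M_def using nrm_nonneg[OF assms] by (simp add: sum_nonneg)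
  have "N x \<le> M * norm x" for x
  proof -
    have "N x = N (\<Sum>b\<in>Basis. (x \<bullet> b) *\<^sub>R b)" by (simp add: euclidean_representation)
    also have "\<dots> \<le> (\<Sum>b\<in>Basis. N ((x \<bullet> b) *\<^sub>R b))" by (rule nrm_sum[OF assms])
    also have "\<dots> = (\<Sum>b\<in>Basis. \<bar>x \<bullet> b\<bar> * N b)" using nrm_scale[OF assms] by simp
    also have "\<dots> \<le> (\<Sum>b\<in>Basis. norm x * N b)"
      by (rule sum_mono) (simp add: Basis_le_norm mult_right_mono nrm_nonneg[OF assms])
    also have "\<dots> = M * norm x" unfolding M_def by (simp add: sum_distrib_left mult.commute)
    finally show ?thesis .
  qed
  then show ?thesis using M0 by blast
qed

lemma nrm_cont:
  fixes N :: "'a::euclidean_space \<Rightarrow> real"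
  assumes "is_norm N"
  shows "continuous_on S N"
proof -
  obtain M where M: "M \<ge> 0" "\<And>x. N x \<le> M * norm x" using nrm_upper[OF assms] by blast
  have lip: "\<bar>N x - N y\<bar> \<le> M * dist x y" for x y
  proof -
    have "N x \<le> N y + N (x - y)" using nrm_tri[OF assms, of y "x - y"] by simp
    moreover have "N y \<le> N x + N (y - x)" using nrm_tri[OF assms, of x "y - x"] by simp
    moreover have "N (x - y) \<le> M * dist x y" using M(2)[of "x - y"] by (simp add: dist_norm)
    moreover have "N (y - x) \<le> M * dist x y" using M(2)[of "y - x"] by (simp add: dist_norm norm_minus_commute)
    ultimately show ?thesis by linarith
  qed
  show ?thesis unfolding continuous_on_iff
  proof (intro ballI allI impI)
    fix x e assume "x \<in> S" "(0::real) < e"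
    show "\<exists>d>0. \<forall>x'\<in>S. dist x' x < d \<longrightarrow> dist (N x') (N x) < e"
    proof (intro exI[of _ "e / (M + 1)"] conjI ballI impI)
      show "e / (M + 1) > 0" using \<open>e > 0\<close> M by simp
      fix x' assume "x' \<in> S" "dist x' x < e / (M + 1)"
      have "dist (N x') (N x) \<le> M * dist x' x" using lip by (simp add: dist_real_def)
      also have "\<dots> \<le> (M + 1) * dist x' x" by (simp add: mult_right_mono)
      also have "\<dots> < (M+1) * (e / (M + 1))"
        using \<open>dist x' x < e / (M + 1)\<close> M by (intro mult_strict_left_mono) auto
      also have "\<dots> = e" using M by simp
      finally show "dist (N x') (N x) < e" .
    qed
  qed
qed

lemma nrm_unit:
  fixes N :: "'a::euclidean_space \<Rightarrow> real"
  assumes "is_norm N"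
  shows "\<exists>v. N v = 1"
proof -
  obtain b :: 'a where b: "b \<in> Basis" using nonempty_Basis by blast
  then have "b \<noteq> 0" by auto
  then have "N b > 0" using nrm_def0[OF assms] nrm_nonneg[OF assms] by (metis less_eq_real_def)
  then have "N ((1 / N b) *\<^sub>R b) = 1" using nrm_scale[OF assms] by simp
  then show ?thesis by blast
qed

lemma nrm_lower:
  fixes N :: "'a::euclidean_space \<Rightarrow> real"
  assumes "is_norm N"
  shows "\<exists>m>0. \<forall>x. m * norm x \<le> N x"
proof -
  have "compact (sphere (0::'a) 1)" by simp
  moreover have "sphere (0::'a) 1 \<noteq> {}"
  proof -
    obtain b :: 'a where b: "b \<in> Basis" using nonempty_Basis by blast
    then show ?thesis by (auto intro!: exI[of _ b])
  qed
  ultimately have "\<exists>s\<in>sphere 0 1. \<forall>t\<in>sphere 0 1. N s \<le> N t"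
    by (rule continuous_attains_inf[OF _ _ nrm_cont[OF assms]])
  then obtain s where s: "s \<in> sphere 0 1" "\<And>t. t \<in> sphere 0 1 \<Longrightarrow> N s \<le> N t"
    by blast
  have "s \<noteq> 0" using s(1) by auto
  then have m: "N s > 0" using nrm_def0[OF assms] nrm_nonneg[OF assms] by (metis less_eq_real_def)
  have "N s * norm x \<le> N x" for x
  proof (cases "x = 0")
    case True then show ?thesis by (simp add: nrm_zero[OF assms])
  next
    case False
    then have "(1 / norm x) *\<^sub>R x \<in> sphere 0 1" by simp
    then have "N s \<le> N ((1 / norm x) *\<^sub>R x)" by (rule s(2))
    also have "\<dots> = N x / norm x" using nrm_scale[OF assms] by simp
    finally show ?thesis using False by (simp add: field_simps)
  qed
  then show ?thesis using m by blast
qed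

lemma nball_compact:
  fixes N :: "'a::euclidean_space \<Rightarrow> real"
  assumes "is_norm N"
  shows "compact (nball N B)"
proof -
  obtain m where m: "m > 0" "\<And>x. m * norm x \<le> N x" using nrm_lower[OF assms] by blast
  have cl: "closed (nball N B)" unfolding nball_def
    by (intro closed_Collect_le continuous_on_compose2[OF nrm_cont[OF assms]] continuous_intros) auto
  have "bounded (nball N B)" unfolding bounded_iff
  proof (intro exI ballI)
    fix x assume "x \<in> nball N B"
    then have "N (x - fst B) \<le> snd B" by (simp add: nball_def)
    then have "norm (x - fst B) \<le> snd B / m" using m(2)[of "x - fst B"] m(1) by (simp add: field_simps)
    then show "norm x \<le> norm (fst B) + snd B / m" using norm_triangle_sub[of x "fst B"] by linarith
  qed
  then show ?thesis using cl by (simp add: compact_eq_bounded_closed)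
qed

lemma nball_rad_le:
  fixes N :: "'a::euclidean_space \<Rightarrow> real"
  assumes "is_norm N" "nball N B1 \<subseteq> nball N B2" "snd B1 \<ge> 0"
  shows "snd B1 \<le> snd B2"
proof -
  obtain v where v: "N v = 1" using nrm_unit[OF assms(1)] by blast
  let ?p = "fst B1 + snd B1 *\<^sub>R v" and ?q = "fst B1 - snd B1 *\<^sub>R v"
  have "?p \<in> nball N B1" "?q \<in> nball N B1" unfolding nball_def
    using nrm_scale[OF assms(1), of "snd B1" v] nrm_scale[OF assms(1), of "- snd B1" v] v assms(3) by auto
  then have "?p \<in> nball N B2" "?q \<in> nball N B2" using assms(2) by blast+
  then have p: "N (?p - fst B2) \<le> snd B2" and q: "N (?q - fst B2) \<le> snd B2"
    by (auto simp: nball_def)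
  have "2 * snd B1 = N ((2 * snd B1) *\<^sub>R v)" using nrm_scale[OF assms(1)] v assms(3) by simp
  also have "(2 * snd B1) *\<^sub>R v = snd B1 *\<^sub>R v + snd B1 *\<^sub>R v"
    by (metis mult_2 scaleR_left_distrib)
  also have "snd B1 *\<^sub>R v + snd B1 *\<^sub>R v = (?p - fst B2) - (?q - fst B2)" by (simp add: algebra_simps)
  also have "N \<dots> \<le> N (?p - fst B2) + N (?q - fst B2)"
    using nrm_tri[OF assms(1), of "?p - fst B2" "-(?q - fst B2)"] nrm_neg[OF assms(1), of "?q - fst B2"] by simp
  finally show ?thesis using p q by linarith
qed

lemma center_in_nball: "is_norm N \<Longrightarrow> snd B \<ge> 0 \<Longrightarrow> fst B \<in> nball N B"
  by (simp add: nball_def nrm_zero)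

lemma valid_nil[simp]: "valid_word k []" by (simp add: valid_word_def)

lemma valid_snoc: "valid_word k (J @ [a]) \<longleftrightarrow> valid_word k J \<and> 1 \<le> a \<and> a \<le> k J"
proof
  assume h: "valid_word k (J @ [a])"
  have "valid_word k J" unfolding valid_word_def
  proof (intro allI impI)
    fix n assume "n < length J"
    then show "1 \<le> J ! n \<and> J ! n \<le> k (take n J)"
      using h[unfolded valid_word_def, rule_format, of n] by (simp add: nth_append)
  qed
  moreover have "1 \<le> a \<and> a \<le> k J"
    using h[unfolded valid_word_def, rule_format, of "length J"] by simp
  ultimately show "valid_word k J \<and> 1 \<le> a \<and> a \<le> k J" by blast
next
  assume h: "valid_word k J \<and> 1 \<le> a \<and> a \<le> k J"
  show "valid_word k (J @ [a])" unfolding valid_word_def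
  proof (intro allI impI)
    fix n assume "n < length (J @ [a])"
    then have "n < length J \<or> n = length J" by auto
    then show "1 \<le> (J @ [a]) ! n \<and> (J @ [a]) ! n \<le> k (take n (J @ [a]))"
    proof
      assume "n < length J" then show ?thesis
        using h[THEN conjunct1, unfolded valid_word_def, rule_format, of n] by (simp add: nth_append)
    qed (use h in simp)
  qed
qed

lemma valid_take: "valid_word k J \<Longrightarrow> valid_word k (take n J)"
  unfolding valid_word_def by (auto simp: min_def)

lemma sys_child:
  assumes "system_of_balls N C k S" "valid_word k I" "j \<in> {1..k I}"
  shows "nball N (S (I @ [j])) \<subseteq> nball N (S I)"
  using assms unfolding system_of_balls_def by blast

lemma sys_rad: "system_of_balls N C k S \<Longrightarrow> valid_word k I \<Longrightarrow> rad (S I) \<ge> 0"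
  unfolding system_of_balls_def by blast

lemma sys_k: "system_of_balls N C k S \<Longrightarrow> valid_word k I \<Longrightarrow> k I \<ge> 1"
  unfolding system_of_balls_def by blast

lemma sys_C: "system_of_balls N C k S \<Longrightarrow> C = (\<Inter>n. \<Union>I\<in>{I. valid_word k I \<and> length I = n}. nball N (S I))"
  unfolding system_of_balls_def by blast

lemma sys_lim: "system_of_balls N C k S \<Longrightarrow> valid_seq k i \<Longrightarrow> (\<lambda>n. rad (S (map i [0..<n]))) \<longlonglongrightarrow> 0"
  unfolding system_of_balls_def by blast

lemma nball_prefix:
  assumes sys: "system_of_balls N C k S"
  shows "valid_word k J \<Longrightarrow> nball N (S J) \<subseteq> nball N (S (take n J))"
proof (induction J rule: rev_induct)
  case Nil then show ?case by simp
next
  case (snoc a J)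
  then have v: "valid_word k J" "a \<in> {1..k J}" using valid_snoc by auto
  have sub: "nball N (S (J @ [a])) \<subseteq> nball N (S J)" using sys_child[OF sys v] .
  show ?case
  proof (cases "n \<le> length J")
    case True
    then have "take n (J @ [a]) = take n J" by simp
    then show ?thesis using snoc.IH[OF v(1)] sub by auto
  next
    case False
    then have "take n (J @ [a]) = J @ [a]" by simp
    then show ?thesis by simp
  qed
qed

lemma C_nonempty:
  fixes N :: "'a::euclidean_space \<Rightarrow> real"
  assumes nrm: "is_norm N" and sys: "system_of_balls N C k S"
  shows "C \<noteq> {}"
proof -
  define w where "w n = (replicate n (1::nat))" for n
  have vw: "valid_word k (w n)" for n
  proof (induction n)
    case 0 then show ?case by (simp add: w_def)
  next
    case (Suc n)
    have "w (Suc n) = w n @ [1]" by (simp add: w_def replicate_append_same)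
    then show ?case using Suc sys_k[OF sys Suc] by (simp add: valid_snoc)
  qed
  have mono: "nball N (S (w n)) \<subseteq> nball N (S (w m))" if "m \<le> n" for m n
  proof -
    have "take m (w n) = w m" using that by (simp add: w_def)
    then show ?thesis using nball_prefix[OF sys vw[of n], of m] by simp
  qed
  have "\<Inter>(range (\<lambda>n. nball N (S (w n)))) \<noteq> {}"
  proof (rule compact_nest)
    show "compact (nball N (S (w n)))" for n by (rule nball_compact[OF nrm])
    show "nball N (S (w n)) \<noteq> {}" for n
      using center_in_nball[OF nrm, of "S (w n)"] sys_rad[OF sys vw[of n]] by (auto simp: rad_def)
  qed (rule mono)
  then obtain p where p: "\<And>n. p \<in> nball N (S (w n))" by blast
  have "p \<in> C"
  proof -
    have "p \<in> (\<Union>I\<in>{I. valid_word k I \<and> length I = n}. nball N (S I))" for n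
      using p[of n] vw[of n] by (auto simp: w_def)
    then show ?thesis using sys_C[OF sys] by blast
  qed
  then show ?thesis by blast
qed

lemma koenig_small:
  assumes sys: "system_of_balls N C k S" and x: "x \<in> C" and e: "(\<epsilon>::real) > 0"
  shows "\<exists>J. valid_word k J \<and> x \<in> nball N (S J) \<and> rad (S J) < \<epsilon>"
proof -
  define W where "W (J::nat list) \<longleftrightarrow> valid_word k J \<and> x \<in> nball N (S J)" for J
  define good where "good (J::nat list) \<longleftrightarrow> (\<forall>n. \<exists>J'. W J' \<and> length J' = length J + n \<and> take (length J) J' = J)" for J
  have Wtake: "W (take m J')" if "W J'" for m :: nat and J' :: "nat list"
    using that nball_prefix[OF sys] valid_take unfolding W_def by blast
  have good_W: "W J" if "good J" for J
  proof -
    have "\<exists>J'. W J' \<and> length J' = length J + 0 \<and> take (length J) J' = J"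
      using that unfolding good_def by blast
    then obtain J' where "W J'" "length J' = length J" "take (length J) J' = J"
      by auto
    then show ?thesis by simp
  qed
  have good0: "good []" unfolding good_def
  proof
    fix n
    have "x \<in> (\<Union>I\<in>{I. valid_word k I \<and> length I = n}. nball N (S I))"
      using x sys_C[OF sys] by blast
    then obtain J' where "valid_word k J'" "length J' = n" "x \<in> nball N (S J')" by blast
    then show "\<exists>J'. W J' \<and> length J' = length [] + n \<and> take (length []) J' = []"
      unfolding W_def by auto
  qed
  have good_step: "\<exists>j. j \<in> {1..k J} \<and> good (J @ [j])" if gJ: "good J" for J
  proof -
    have "\<forall>n. \<exists>J'. W J' \<and> length J' = length J + Suc n \<and> take (length J) J' = J"
      using gJ unfolding good_def by blast
    then obtain F where F: "\<And>n. W (F n)" "\<And>n. length (F n) = length J + Suc n"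
        "\<And>n. take (length J) (F n) = J"
      by metis
    define g where "g n = F n ! length J" for n
    have gin: "g n \<in> {1..k J}" for n
    proof -
      have "valid_word k (F n)" using F(1) W_def by blast
      then have "1 \<le> F n ! length J \<and> F n ! length J \<le> k (take (length J) (F n))"
        unfolding valid_word_def using F(2)[of n] by auto
      then show ?thesis using F(3) g_def by auto
    qed
    have "finite (g ` UNIV)" using gin by (meson finite_atLeastAtMost finite_subset image_subsetI)
    then obtain n0 where inf: "infinite {n. g n = g n0}"
      using pigeonhole_infinite[of "UNIV::nat set" g] by auto
    define j where "j = g n0"
    have "good (J @ [j])" unfolding good_def
    proof
      fix m
      obtain n where n: "n \<ge> m" "g n = j" using inf unfolding infinite_nat_iff_unbounded_le j_def by blast
      define J'' where "J'' = take (length J + 1 + m) (F n)"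
      have "W J''" unfolding J''_def using F(1) Wtake by blast
      moreover have "length J'' = length (J @ [j]) + m" unfolding J''_def using F(2)[of n] n by auto
      moreover have "take (length (J @ [j])) J'' = J @ [j]"
      proof -
        have "take (length (J @ [j])) J'' = take (Suc (length J)) (F n)"
          unfolding J''_def by (simp add: min_def)
        also have "\<dots> = take (length J) (F n) @ [F n ! length J]"
          using F(2)[of n] by (simp add: take_Suc_conv_app_nth)
        also have "\<dots> = J @ [j]" using F(3) n g_def by simp
        finally show ?thesis .
      qed
      ultimately show "\<exists>J'. W J' \<and> length J' = length (J @ [j]) + m \<and> take (length (J @ [j])) J' = J @ [j]"
        by blast
    qed
    then show ?thesis using gin j_def by blast
  qed
  define f where "f = rec_nat [] (\<lambda>n w. w @ [SOME j. j \<in> {1..k w} \<and> good (w @ [j])])"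
  have f0: "f 0 = []" and fS: "f (Suc n) = f n @ [SOME j. j \<in> {1..k (f n)} \<and> good (f n @ [j])]" for n
    unfolding f_def by simp_all
  have fgood: "good (f n) \<and> length (f n) = n" for n
  proof (induction n)
    case 0 then show ?case using good0 f0 by simp
  next
    case (Suc n)
    then have "\<exists>j. j \<in> {1..k (f n)} \<and> good (f n @ [j])" using good_step by blast
    then have "(SOME j. j \<in> {1..k (f n)} \<and> good (f n @ [j])) \<in> {1..k (f n)} \<and>
        good (f n @ [SOME j. j \<in> {1..k (f n)} \<and> good (f n @ [j])])"
      by (rule someI_ex)
    then show ?case using Suc fS[of n] by simp
  qed
  define i where "i n = f (Suc n) ! n" for n
  have mapi: "map i [0..<n] = f n" for n
  proof (induction n)
    case 0 then show ?case using f0 by simp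
  next
    case (Suc n)
    have "map i [0..<Suc n] = f n @ [i n]" using Suc by simp
    also have "\<dots> = f (Suc n)" unfolding i_def using fS[of n] fgood[of n] by (simp add: nth_append)
    finally show ?case .
  qed
  have vf: "valid_word k (f n)" for n using fgood good_W W_def by blast
  have "valid_seq k i" unfolding valid_seq_def
  proof
    fix n
    have "valid_word k (f (Suc n))" by (rule vf)
    then have "1 \<le> i n \<and> i n \<le> k (f n)"
      unfolding i_def using fS[of n] fgood[of n] valid_snoc by (metis nth_append_length)
    then show "1 \<le> i n \<and> i n \<le> k (map i [0..<n])" using mapi by simp
  qed
  then have "(\<lambda>n. rad (S (map i [0..<n]))) \<longlonglongrightarrow> 0" by (rule sys_lim[OF sys])
  then have "(\<lambda>n. rad (S (f n))) \<longlonglongrightarrow> 0" by (simp add: mapi)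
  then obtain n where "rad (S (f n)) < \<epsilon>"
    using e by (metis (no_types, lifting) LIMSEQ_D abs_less_iff diff_zero less_eq_real_def order_refl real_norm_def)
  moreover have "W (f n)" using fgood good_W by blast
  ultimately show ?thesis unfolding W_def by blast
qed

lemma prefix_cross:
  assumes sys: "system_of_balls N C k S" and root: "rad (S []) \<ge> \<epsilon>"
  shows "valid_word k J \<Longrightarrow> x \<in> nball N (S J) \<Longrightarrow> rad (S J) < \<epsilon> \<Longrightarrow>
    \<exists>I j. valid_word k I \<and> j \<in> {1..k I} \<and> x \<in> nball N (S I) \<and> x \<in> nball N (S (I @ [j]))
      \<and> rad (S I) \<ge> \<epsilon> \<and> rad (S (I @ [j])) < \<epsilon>"
proof (induction J rule: rev_induct)
  case Nil then show ?case using root by simp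
next
  case (snoc a J)
  then have v: "valid_word k J" "a \<in> {1..k J}" using valid_snoc by auto
  have "x \<in> nball N (S J)" using sys_child[OF sys v] snoc.prems(2) by blast
  show ?case
  proof (cases "rad (S J) < \<epsilon>")
    case True then show ?thesis using snoc.IH[OF v(1) \<open>x \<in> nball N (S J)\<close>] by blast
  next
    case False then show ?thesis using v snoc.prems \<open>x \<in> nball N (S J)\<close> by force
  qed
qed

lemma ndist_le:
  assumes "is_norm N" "c0 \<in> C"
  shows "ndist_set N y C \<le> N (y - c0)"
  unfolding ndist_set_def
  by (rule cInf_lower) (use assms nrm_nonneg[OF assms(1)] in \<open>auto intro!: bdd_belowI[of _ 0]\<close>)

lemma ndist_ge:
  assumes "C \<noteq> {}" "\<And>z. z \<in> C \<Longrightarrow> d \<le> N (y - z)"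
  shows "d \<le> ndist_set N y C"
  unfolding ndist_set_def using assms by (intro cInf_greatest) auto

lemma ndist_nonneg: "is_norm N \<Longrightarrow> C \<noteq> {} \<Longrightarrow> 0 \<le> ndist_set N y C"
  by (rule ndist_ge) (auto simp: nrm_nonneg)

lemma ndist_attain:
  fixes N :: "'a::euclidean_space \<Rightarrow> real"
  assumes "is_norm N" "compact C" "C \<noteq> {}"
  shows "\<exists>z\<in>C. N (y - z) = ndist_set N y C"
proof -
  have "continuous_on C (\<lambda>z. N (y - z))"
    by (intro continuous_on_compose2[OF nrm_cont[OF assms(1)]] continuous_intros) auto
  then have "\<exists>z\<in>C. \<forall>w\<in>C. N (y - z) \<le> N (y - w)"
    by (rule continuous_attains_inf[OF assms(2,3)])
  then obtain z where z: "z \<in> C" "\<And>w. w \<in> C \<Longrightarrow> N (y - z) \<le> N (y - w)" by blast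
  have "ndist_set N y C = N (y - z)" unfolding ndist_set_def
    by (rule cInf_eq_minimum) (use z in auto)
  then show ?thesis using z by auto
qed

lemma ndist_le_hgt:
  assumes nrm: "is_norm N" and ne: "C \<noteq> {}" and y: "y \<in> nball N B"
  shows "ndist_set N y C \<le> hgt N C B"
proof -
  obtain c0 where c0: "c0 \<in> C" using ne by blast
  have "bdd_above ((\<lambda>x. ndist_set N x C) ` nball N B)"
  proof (rule bdd_aboveI2)
    fix x assume "x \<in> nball N B"
    then have "N (x - fst B) \<le> snd B" by (simp add: nball_def)
    moreover have "ndist_set N x C \<le> N (x - c0)" by (rule ndist_le[OF nrm c0])
    moreover have "N (x - c0) \<le> N (x - fst B) + N (fst B - c0)" by (rule nrm_tri3[OF nrm])
    ultimately show "ndist_set N x C \<le> snd B + N (fst B - c0)" by linarith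
  qed
  then show ?thesis unfolding hgt_def using y by (intro cSup_upper) auto
qed

lemma hgt_nonneg:
  assumes "is_norm N" "C \<noteq> {}" "snd B \<ge> 0"
  shows "0 \<le> hgt N C B"
  using ndist_nonneg[OF assms(1,2)] ndist_le_hgt[OF assms(1,2) center_in_nball[OF assms(1,3)]]
  by (meson order_trans)

lemma valid_child: "valid_word k I \<Longrightarrow> j \<in> {1..k I} \<Longrightarrow> valid_word k (I @ [j])"
  by (simp add: valid_snoc)

lemma mcr_le:
  assumes sys: "system_of_balls N C k S" and v: "valid_word k I" and j: "j \<in> {1..k I}"
  shows "min_child_rad k S I \<le> rad (S (I @ [j]))"
  unfolding min_child_rad_def using j by (intro Min_le) auto

lemma mcr_nonneg:
  assumes sys: "system_of_balls N C k S" and v: "valid_word k I"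
  shows "0 \<le> min_child_rad k S I"
proof -
  have ne: "{1..k I} \<noteq> {}" using sys_k[OF sys v] by auto
  show ?thesis unfolding min_child_rad_def
    using ne sys_rad[OF sys valid_child[OF v]] by (subst Min_ge_iff) auto
qed

lemma mcr_le_rad:
  fixes N :: "'a::euclidean_space \<Rightarrow> real"
  assumes nrm: "is_norm N" and sys: "system_of_balls N C k S" and v: "valid_word k I"
  shows "min_child_rad k S I \<le> rad (S I)"
proof -
  have j: "1 \<in> {1..k I}" using sys_k[OF sys v] by auto
  have "rad (S (I @ [1])) \<le> rad (S I)"
    using nball_rad_le[OF nrm sys_child[OF sys v j]] sys_rad[OF sys valid_child[OF v j]]
    by (simp add: rad_def)
  then show ?thesis using mcr_le[OF sys v j] by linarith
qed

lemma thick_nonneg: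
  assumes nrm: "is_norm N" and sys: "system_of_balls N C k S" and ne: "C \<noteq> {}"
  shows "0 \<le> thickness N C k S"
  unfolding thickness_def
proof (rule INF_greatest)
  fix I assume "I \<in> {I. valid_word k I}"
  then have v: "valid_word k I" by simp
  have "0 \<le> hgt N C (S I)" using hgt_nonneg[OF nrm ne] sys_rad[OF sys v] by (simp add: rad_def)
  moreover have "0 \<le> min_child_rad k S I" by (rule mcr_nonneg[OF sys v])
  ultimately show "0 \<le> (if hgt N C (S I) = 0 then \<infinity> else ereal (min_child_rad k S I / hgt N C (S I)))"
    by auto
qed

lemma thick_le:
  assumes "valid_word k I" "hgt N C (S I) \<noteq> 0"
  shows "thickness N C k S \<le> ereal (min_child_rad k S I / hgt N C (S I))"
  unfolding thickness_def using assms by (intro INF_lower2[of I]) auto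

lemma thick_bound:
  fixes N :: "'a::euclidean_space \<Rightarrow> real"
  assumes nrm: "is_norm N" and sys: "system_of_balls N C k S" and ne: "C \<noteq> {}"
    and T: "thickness N C k S \<noteq> 0"
  shows "\<exists>t>0. \<forall>I. valid_word k I \<longrightarrow> t * hgt N C (S I) \<le> min_child_rad k S I"
proof -
  have T0: "0 \<le> thickness N C k S" by (rule thick_nonneg[OF nrm sys ne])
  obtain t where t: "t > 0" "ereal t \<le> thickness N C k S"
  proof (cases "thickness N C k S")
    case (real x) then show ?thesis using that[of x] T T0 by auto
  next
    case PInf then show ?thesis using that[of 1] by auto
  next
    case MInf then show ?thesis using T0 by auto
  qed
  have "t * hgt N C (S I) \<le> min_child_rad k S I" if v: "valid_word k I" for I
  proof (cases "hgt N C (S I) = 0")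
    case True then show ?thesis using mcr_nonneg[OF sys v] by simp
  next
    case False
    have "0 \<le> hgt N C (S I)"
      using hgt_nonneg[OF nrm ne] sys_rad[OF sys v] by (simp add: rad_def)
    then have h0: "0 < hgt N C (S I)" using False by (metis less_eq_real_def)
    have "ereal t \<le> ereal (min_child_rad k S I / hgt N C (S I))"
      using t(2) thick_le[of k I N C S, OF v False] by (rule order_trans)
    then have "t \<le> min_child_rad k S I / hgt N C (S I)" by simp
    then show ?thesis using h0 by (simp add: field_simps)
  qed
  then show ?thesis using t(1) by blast
qed

lemma dich_core:
  fixes T1 T2 :: ereal and c h1 h2 m1 m2 :: real
  assumes prod: "T1 * T2 \<ge> ereal (1 / c^2)" and c: "c > 0" and T: "0 \<le> T1" "0 \<le> T2"
    and nn: "h1 \<ge> 0" "h2 \<ge> 0" "m1 \<ge> 0" "m2 \<ge> 0"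
    and t1: "h1 \<noteq> 0 \<Longrightarrow> T1 \<le> ereal (m1 / h1)" and t2: "h2 \<noteq> 0 \<Longrightarrow> T2 \<le> ereal (m2 / h2)"
  shows "h1 \<le> c * m2 \<or> h2 \<le> c * m1"
proof (rule ccontr)
  assume "\<not> ?thesis"
  then have a: "c * m2 < h1" "c * m1 < h2" by auto
  have "c * m2 \<ge> 0" "c * m1 \<ge> 0" using c nn by simp_all
  then have p1: "h1 > 0" "h2 > 0" using a by linarith+
  have le: "T1 * T2 \<le> ereal (m1 / h1) * ereal (m2 / h2)"
    using t1 t2 p1 T nn by (intro ereal_mult_mono') auto
  have "ereal (1 / c^2) \<le> ereal (m1 / h1) * ereal (m2 / h2)" using prod le by (rule order_trans)
  then have "1 / c^2 \<le> m1 / h1 * (m2 / h2)" by simp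
  then have "h1 * h2 \<le> c^2 * (m1 * m2)" using p1 c by (simp add: field_simps)
  moreover have "(c * m2) * (c * m1) < h1 * h2"
    using a c nn p1 by (intro mult_strict_mono) auto
  ultimately show False by (simp add: power2_eq_square algebra_simps)
qed

lemma step:
  fixes N :: "'a::euclidean_space \<Rightarrow> real"
  assumes nrm: "is_norm N"
    and cX: "compact CX" and cY: "compact CY" and neX: "CX \<noteq> {}" and neY: "CY \<noteq> {}"
    and sysX: "system_of_balls N CX kX SX" and sysY: "system_of_balls N CY kY SY"
    and udX: "uniformly_dense N r kX SX"
    and r: "0 < r" "r < 1/2"
    and dich: "\<And>I L. valid_word kY I \<Longrightarrow> valid_word kX L \<Longrightarrow>
        hgt N CY (SY I) \<le> (1 - 2*r) * min_child_rad kX SX L \<or> hgt N CX (SX L) \<le> (1 - 2*r) * min_child_rad kY SY I"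
    and vL: "valid_word kX L" and x: "x \<in> CY" and xin: "N (x - fst (SX L)) \<le> (1 - 2*r) * rad (SX L)"
    and pos: "0 < rad (SX L)" and root: "r * rad (SX L) \<le> rad (SY [])"
  shows "(\<exists>L' z. valid_word kX L' \<and> z \<in> CY \<and> N (z - fst (SX L')) \<le> (1 - 2*r) * rad (SX L')
            \<and> rad (SX L') \<le> r * rad (SX L))
       \<or> (\<exists>I' y. valid_word kY I' \<and> y \<in> CX \<and> N (y - fst (SY I')) \<le> (1 - 2*r) * rad (SY I')
            \<and> rad (SY I') \<le> r * rad (SX L))"
proof -
  define c where "c = 1 - 2*r"
  define \<beta> where "\<beta> = rad (SX L)"
  define b where "b = fst (SX L)"
  define \<epsilon> where "\<epsilon> = r * \<beta>"
  have c0: "0 < c" using r by (simp add: c_def)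
  have e0: "0 < \<epsilon>" using r pos by (simp add: \<epsilon>_def \<beta>_def)
  obtain J where J: "valid_word kY J" "x \<in> nball N (SY J)" "rad (SY J) < \<epsilon>"
    using koenig_small[OF sysY x e0] by blast
  have rootY: "rad (SY []) \<ge> \<epsilon>" using root by (simp add: \<epsilon>_def \<beta>_def)
  obtain I j where Ij: "valid_word kY I" "j \<in> {1..kY I}" "x \<in> nball N (SY I)"
      "x \<in> nball N (SY (I @ [j]))" "rad (SY I) \<ge> \<epsilon>" "rad (SY (I @ [j])) < \<epsilon>"
    using prefix_cross[OF sysY rootY J] by blast
  define a where "a = fst (SY I)"
  define \<alpha> where "\<alpha> = rad (SY I)"
  have xa: "N (x - a) \<le> \<alpha>" using Ij(3) by (simp add: nball_def a_def \<alpha>_def rad_def)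
  have xb: "N (x - b) \<le> c * \<beta>" using xin by (simp add: b_def c_def \<beta>_def)
  have ball_sub: "nball N (SX L) = {y. N (y - b) \<le> \<beta>}" by (simp add: nball_def b_def \<beta>_def rad_def)
  consider (a) "hgt N CY (SY I) \<le> c * min_child_rad kX SX L"
    | (b) "hgt N CX (SX L) \<le> c * min_child_rad kY SY I"
    using dich[OF Ij(1) vL] c_def by blast
  then show ?thesis
  proof cases
    case a
    obtain q where q1: "N (q - x) \<le> \<epsilon>" and q2: "N (q - a) \<le> \<alpha> - \<epsilon>"
    proof (cases "N (a - x) \<le> \<epsilon>")
      case True
      then show ?thesis using that[of a] Ij(5) nrm_zero[OF nrm] by (simp add: \<alpha>_def)
    next
      case False
      define t where "t = \<epsilon> / N (a - x)"
      have Npos: "N (a - x) > 0" using False e0 by linarith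
      have t01: "0 \<le> t" "t \<le> 1" using False e0 Npos by (simp_all add: t_def field_simps)
      let ?q = "x + t *\<^sub>R (a - x)"
      have "N (?q - x) = t * N (a - x)" using nrm_scale[OF nrm, of t "a - x"] t01 by simp
      also have "\<dots> = \<epsilon>" using Npos by (simp add: t_def)
      finally have 1: "N (?q - x) \<le> \<epsilon>" by simp
      have "?q - a = (1 - t) *\<^sub>R (x - a)" by (simp add: algebra_simps)
      then have "N (?q - a) = (1 - t) * N (x - a)" using nrm_scale[OF nrm, of "1 - t" "x - a"] t01 by simp
      also have "\<dots> = N (a - x) - \<epsilon>" using Npos nrm_sym[OF nrm, of x a]
        by (simp add: t_def algebra_simps)
      also have "\<dots> \<le> \<alpha> - \<epsilon>" using xa nrm_sym[OF nrm, of x a] by simp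
      finally show ?thesis using that 1 by blast
    qed
    define D where "D = (q, \<epsilon>)"
    have DX: "nball N D \<subseteq> nball N (SX L)"
    proof
      fix y assume "y \<in> nball N D"
      then have y: "N (y - q) \<le> \<epsilon>" by (simp add: nball_def D_def)
      have "N (y - b) \<le> N (y - q) + N (q - x) + N (x - b)"
        using nrm_tri3[OF nrm, of y b q] nrm_tri3[OF nrm, of q b x] by linarith
      also have "\<dots> \<le> \<epsilon> + \<epsilon> + c * \<beta>" using y q1 xb by linarith
      also have "\<dots> = \<beta>" by (simp add: \<epsilon>_def c_def algebra_simps)
      finally show "y \<in> nball N (SX L)" using ball_sub by simp
    qed
    have DY: "nball N D \<subseteq> nball N (SY I)"
    proof
      fix y assume "y \<in> nball N D"
      then have y: "N (y - q) \<le> \<epsilon>" by (simp add: nball_def D_def)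
      have "N (y - a) \<le> N (y - q) + N (q - a)" by (rule nrm_tri3[OF nrm])
      also have "\<dots> \<le> \<alpha>" using y q2 by linarith
      finally show "y \<in> nball N (SY I)" by (simp add: nball_def a_def \<alpha>_def rad_def)
    qed
    have "\<exists>j'\<in>{1..kX L}. nball N (SX (L @ [j'])) \<subseteq> nball N D"
      using udX[unfolded uniformly_dense_def, rule_format, of L D] vL DX e0
      by (simp add: D_def rad_def \<epsilon>_def \<beta>_def)
    then obtain j' where j': "j' \<in> {1..kX L}" "nball N (SX (L @ [j'])) \<subseteq> nball N D" by blast
    define L' where "L' = L @ [j']"
    have vL': "valid_word kX L'" using valid_child[OF vL j'(1)] L'_def by simp
    have r'0: "0 \<le> rad (SX L')" by (rule sys_rad[OF sysX vL'])
    have r'le: "rad (SX L') \<le> \<epsilon>"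
      using nball_rad_le[OF nrm j'(2)] r'0 by (simp add: L'_def D_def rad_def)
    have b'in: "fst (SX L') \<in> nball N (SY I)"
      using center_in_nball[OF nrm, of "SX L'"] r'0 j'(2) DY by (auto simp: rad_def L'_def)
    have "ndist_set N (fst (SX L')) CY \<le> hgt N CY (SY I)" by (rule ndist_le_hgt[OF nrm neY b'in])
    also have "\<dots> \<le> c * min_child_rad kX SX L" by (rule a)
    also have "\<dots> \<le> c * rad (SX L')"
      using mcr_le[OF sysX vL j'(1)] c0 by (simp add: L'_def)
    finally have nd: "ndist_set N (fst (SX L')) CY \<le> c * rad (SX L')" .
    obtain z where z: "z \<in> CY" "N (fst (SX L') - z) = ndist_set N (fst (SX L')) CY"
      using ndist_attain[OF nrm cY neY] by blast
    have "N (z - fst (SX L')) \<le> c * rad (SX L')" using z nd nrm_sym[OF nrm] by metis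
    then show ?thesis using vL' z(1) r'le c_def \<epsilon>_def \<beta>_def by blast
  next
    case b
    define A' where "A' = SY (I @ [j])"
    have vI': "valid_word kY (I @ [j])" by (rule valid_child[OF Ij(1,2)])
    have \<rho>0: "0 \<le> rad A'" using sys_rad[OF sysY vI'] by (simp add: A'_def)
    have xa': "N (fst A' - x) \<le> rad A'" using Ij(4) nrm_sym[OF nrm]
      by (simp add: nball_def A'_def rad_def)
    have "N (fst A' - b) \<le> N (fst A' - x) + N (x - b)" by (rule nrm_tri3[OF nrm])
    also have "\<dots> \<le> \<epsilon> + c * \<beta>"
    proof -
      have "rad A' < \<epsilon>" using Ij(6) by (simp add: A'_def)
      then show ?thesis using xa' xb by linarith
    qed
    also have "\<dots> \<le> \<beta>" using r pos by (simp add: \<epsilon>_def c_def \<beta>_def algebra_simps)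
    finally have a'in: "fst A' \<in> nball N (SX L)" using ball_sub by simp
    have "ndist_set N (fst A') CX \<le> hgt N CX (SX L)" by (rule ndist_le_hgt[OF nrm neX a'in])
    also have "\<dots> \<le> c * min_child_rad kY SY I" by (rule b)
    also have "\<dots> \<le> c * rad A'"
      using mcr_le[OF sysY Ij(1,2)] c0 by (simp add: A'_def)
    finally have nd: "ndist_set N (fst A') CX \<le> c * rad A'" .
    obtain y where y: "y \<in> CX" "N (fst A' - y) = ndist_set N (fst A') CX"
      using ndist_attain[OF nrm cX neX] by blast
    have "N (y - fst A') \<le> c * rad A'" using y nd nrm_sym[OF nrm] by metis
    moreover have "rad A' \<le> r * rad (SX L)" using Ij(6) by (simp add: A'_def \<epsilon>_def \<beta>_def)
    ultimately show ?thesis using vI' y(1) c_def A'_def by blast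
  qed
qed

lemma low:
  fixes N :: "'a::euclidean_space \<Rightarrow> real"
  assumes nrm: "is_norm N" and sys: "system_of_balls N C k S" and ne: "C \<noteq> {}"
    and t: "t > 0" "\<And>I. valid_word k I \<Longrightarrow> t * hgt N C (S I) \<le> min_child_rad k S I"
    and vL: "valid_word k L" and c: "0 \<le> c" "c \<le> 1"
    and xin: "N (x - fst (S L)) \<le> c * rad (S L)"
    and sep: "\<And>q. q \<in> C \<Longrightarrow> \<delta> \<le> N (x - q)"
  shows "t * \<delta> \<le> rad (S L)"
proof -
  have r0: "0 \<le> rad (S L)" by (rule sys_rad[OF sys vL])
  have "c * rad (S L) \<le> rad (S L)" using c r0 by (simp add: mult_left_le_one_le)
  then have "x \<in> nball N (S L)" using xin by (simp add: nball_def rad_def)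
  then have "ndist_set N x C \<le> hgt N C (S L)" by (rule ndist_le_hgt[OF nrm ne])
  moreover have "\<delta> \<le> ndist_set N x C" by (rule ndist_ge[of C \<delta> N x, OF ne sep])
  ultimately have "t * \<delta> \<le> t * hgt N C (S L)" using t(1) by simp
  also have "\<dots> \<le> min_child_rad k S L" by (rule t(2)[OF vL])
  also have "\<dots> \<le> rad (S L)" by (rule mcr_le_rad[OF nrm sys vL])
  finally show ?thesis .
qed

lemma sep_exists:
  fixes N :: "'a::euclidean_space \<Rightarrow> real"
  assumes nrm: "is_norm N" and c1: "compact C1" "C1 \<noteq> {}" and c2: "compact C2" "C2 \<noteq> {}"
    and disj: "C1 \<inter> C2 = {}"
  shows "\<exists>\<delta>>0. \<forall>p\<in>C1. \<forall>q\<in>C2. \<delta> \<le> N (p - q)"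
proof -
  have cp: "compact (C1 \<times> C2)" using c1 c2 by (simp add: compact_Times)
  have ne: "C1 \<times> C2 \<noteq> {}" using c1 c2 by simp
  have "continuous_on (C1 \<times> C2) (\<lambda>z. N (fst z - snd z))"
    by (intro continuous_on_compose2[OF nrm_cont[OF nrm]] continuous_intros) auto
  then have "\<exists>z\<in>C1 \<times> C2. \<forall>w\<in>C1 \<times> C2. N (fst z - snd z) \<le> N (fst w - snd w)"
    by (rule continuous_attains_inf[OF cp ne])
  then obtain z where z: "z \<in> C1 \<times> C2" "\<And>w. w \<in> C1 \<times> C2 \<Longrightarrow> N (fst z - snd z) \<le> N (fst w - snd w)"
    by blast
  have "fst z \<noteq> snd z" using z(1) disj by auto
  then have pos: "N (fst z - snd z) > 0"
    using nrm_def0[OF nrm, of "fst z - snd z"] nrm_nonneg[OF nrm, of "fst z - snd z"] by auto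
  have "\<forall>p\<in>C1. \<forall>q\<in>C2. N (fst z - snd z) \<le> N (p - q)"
    using z(2) by (metis SigmaI fst_conv snd_conv)
  then show ?thesis using pos by blast
qed

theorem theorem1p1:
  fixes N :: "'a::euclidean_space \<Rightarrow> real"
    and C1 C2 :: "'a set"
    and k1 k2 :: "nat list \<Rightarrow> nat"
    and S1 S2 :: "nat list \<Rightarrow> 'a \<times> real"
    and r :: real
  assumes "is_norm N"
    and "compact C1" and "compact C2"
    and "system_of_balls N C1 k1 S1" and "system_of_balls N C2 k2 S2"
    and "0 < r" and "r < 1/2"
    and "thickness N C1 k1 S1 * thickness N C2 k2 S2 \<ge> ereal (1 / (1 - 2*r)^2)"
    and "C1 \<inter> nball N (fst (S2 []), (1 - 2*r) * rad (S2 [])) \<noteq> {}"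
    and "rad (S1 []) \<ge> r * rad (S2 [])" and "rad (S2 []) \<ge> r * rad (S1 [])"
    and "uniformly_dense N r k1 S1" and "uniformly_dense N r k2 S2"
  shows "C1 \<inter> C2 \<noteq> {}"
proof (rule ccontr)
  assume "\<not> C1 \<inter> C2 \<noteq> {}"
  then have disj: "C1 \<inter> C2 = {}" by simp
  note nrm = assms(1) and cp1 = assms(2) and cp2 = assms(3) and sys1 = assms(4) and sys2 = assms(5)
  note r = assms(6,7) and prod = assms(8) and init = assms(9) and root12 = assms(10)
  note ud1 = assms(12) and ud2 = assms(13)
  define c where "c = 1 - 2*r"
  have c0: "0 < c" "c \<le> 1" using r by (simp_all add: c_def)
  have ne1: "C1 \<noteq> {}" by (rule C_nonempty[OF nrm sys1])
  have ne2: "C2 \<noteq> {}" by (rule C_nonempty[OF nrm sys2])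
  define T1 where "T1 = thickness N C1 k1 S1"
  define T2 where "T2 = thickness N C2 k2 S2"
  have T1n: "0 \<le> T1" unfolding T1_def by (rule thick_nonneg[OF nrm sys1 ne1])
  have T2n: "0 \<le> T2" unfolding T2_def by (rule thick_nonneg[OF nrm sys2 ne2])
  have prod': "ereal (1 / c^2) \<le> T1 * T2" using prod by (simp add: c_def T1_def T2_def)
  have "ereal 0 < ereal (1 / c^2)" using c0 by simp
  then have T1z: "T1 \<noteq> 0" and T2z: "T2 \<noteq> 0" using prod' by auto
  have dich: "hgt N C1 (S1 I) \<le> c * min_child_rad k2 S2 L \<or> hgt N C2 (S2 L) \<le> c * min_child_rad k1 S1 I"
    if vI: "valid_word k1 I" and vL: "valid_word k2 L" for I L
  proof (rule dich_core[OF prod' c0(1) T1n T2n])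
    show "0 \<le> hgt N C1 (S1 I)" using hgt_nonneg[OF nrm ne1] sys_rad[OF sys1 vI] by (simp add: rad_def)
    show "0 \<le> hgt N C2 (S2 L)" using hgt_nonneg[OF nrm ne2] sys_rad[OF sys2 vL] by (simp add: rad_def)
    show "0 \<le> min_child_rad k1 S1 I" by (rule mcr_nonneg[OF sys1 vI])
    show "0 \<le> min_child_rad k2 S2 L" by (rule mcr_nonneg[OF sys2 vL])
    show "T1 \<le> ereal (min_child_rad k1 S1 I / hgt N C1 (S1 I))" if "hgt N C1 (S1 I) \<noteq> 0"
      unfolding T1_def by (rule thick_le[of k1 I N C1 S1, OF vI that])
    show "T2 \<le> ereal (min_child_rad k2 S2 L / hgt N C2 (S2 L))" if "hgt N C2 (S2 L) \<noteq> 0"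
      unfolding T2_def by (rule thick_le[of k2 L N C2 S2, OF vL that])
  qed
  obtain t1 where t1: "t1 > 0" "\<And>I. valid_word k1 I \<Longrightarrow> t1 * hgt N C1 (S1 I) \<le> min_child_rad k1 S1 I"
    using thick_bound[OF nrm sys1 ne1] T1z T1_def by blast
  obtain t2 where t2: "t2 > 0" "\<And>I. valid_word k2 I \<Longrightarrow> t2 * hgt N C2 (S2 I) \<le> min_child_rad k2 S2 I"
    using thick_bound[OF nrm sys2 ne2] T2z T2_def by blast
  obtain \<delta> where \<delta>: "\<delta> > 0" "\<And>p q. p \<in> C1 \<Longrightarrow> q \<in> C2 \<Longrightarrow> \<delta> \<le> N (p - q)"
    using sep_exists[OF nrm cp1 ne1 cp2 ne2 disj] by blast
  define R1 where "R1 = rad (S1 [])"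
  define R2 where "R2 = rad (S2 [])"
  define R where "R = max R1 R2"
  define st2 where "st2 x L \<longleftrightarrow> valid_word k2 L \<and> x \<in> C1 \<and> N (x - fst (S2 L)) \<le> c * rad (S2 L)
      \<and> rad (S2 L) \<le> R2 \<and> r * rad (S2 L) \<le> R1" for x L
  define st1 where "st1 y I \<longleftrightarrow> valid_word k1 I \<and> y \<in> C2 \<and> N (y - fst (S1 I)) \<le> c * rad (S1 I)
      \<and> rad (S1 I) \<le> R1 \<and> r * rad (S1 I) \<le> R2" for y I
  have low2: "t2 * \<delta> \<le> rad (S2 L)" if "st2 x L" for x L
    using that unfolding st2_def
    by (intro low[OF nrm sys2 ne2 t2(1) t2(2), of L c x \<delta>]) (use c0 \<delta>(2) in auto)
  have low1: "t1 * \<delta> \<le> rad (S1 I)" if "st1 y I" for y I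
  proof -
    have "\<delta> \<le> N (y - q)" if "q \<in> C1" "y \<in> C2" for q
      using \<delta>(2)[OF that] nrm_sym[OF nrm, of q y] by simp
    then show ?thesis using \<open>st1 y I\<close> unfolding st1_def
      by (intro low[OF nrm sys1 ne1 t1(1) t1(2), of I c y \<delta>]) (use c0 in auto)
  qed
  have dichA: "hgt N C1 (S1 I) \<le> (1 - 2*r) * min_child_rad k2 S2 L \<or> hgt N C2 (S2 L) \<le> (1 - 2*r) * min_child_rad k1 S1 I"
    if "valid_word k1 I" "valid_word k2 L" for I L
    using dich[OF that] by (simp add: c_def)
  have dichB: "hgt N C2 (S2 I) \<le> (1 - 2*r) * min_child_rad k1 S1 L \<or> hgt N C1 (S1 L) \<le> (1 - 2*r) * min_child_rad k2 S2 I"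
    if "valid_word k2 I" "valid_word k1 L" for I L
    using dich[OF that(2,1)] by (auto simp: c_def)
  have r1: "r \<le> 1" using r by simp
  have claim: "(\<exists>x L. st2 x L \<and> rad (S2 L) \<le> r^n * R) \<or> (\<exists>y I. st1 y I \<and> rad (S1 I) \<le> r^n * R)" for n
  proof (induction n)
    case 0
    obtain x where x: "x \<in> C1" "N (x - fst (S2 [])) \<le> c * rad (S2 [])"
      using init by (auto simp: nball_def c_def rad_def)
    have "st2 x []" unfolding st2_def using x root12 by (simp add: R1_def R2_def)
    moreover have "rad (S2 []) \<le> r^0 * R" by (simp add: R_def R2_def)
    ultimately show ?case by blast
  next
    case (Suc n)
    from Suc.IH show ?case
    proof
      assume "\<exists>x L. st2 x L \<and> rad (S2 L) \<le> r^n * R"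
      then obtain x L where st: "st2 x L" and bd: "rad (S2 L) \<le> r^n * R" by blast
      have pos: "0 < rad (S2 L)" using low2[OF st] t2(1) \<delta>(1) by (meson mult_pos_pos order_less_le_trans)
      have S: "valid_word k2 L" "x \<in> C1" "N (x - fst (S2 L)) \<le> (1 - 2*r) * rad (S2 L)"
          "rad (S2 L) \<le> R2" "r * rad (S2 L) \<le> rad (S1 [])"
        using st unfolding st2_def c_def R1_def by auto
      have b1: "r * rad (S2 L) \<le> rad (S2 L)" using pos r1 by (simp add: mult_left_le_one_le)
      have b2: "r * rad (S2 L) \<le> r^Suc n * R" using bd r by simp
      from step[OF nrm cp2 cp1 ne2 ne1 sys2 sys1 ud2 r dichA S(1-3) pos S(5)]
      show ?case
      proof
        assume "\<exists>L' z. valid_word k2 L' \<and> z \<in> C1 \<and> N (z - fst (S2 L')) \<le> (1 - 2 * r) * rad (S2 L') \<and>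
              rad (S2 L') \<le> r * rad (S2 L)"
        then obtain L' z where L': "valid_word k2 L'" "z \<in> C1" "N (z - fst (S2 L')) \<le> (1 - 2 * r) * rad (S2 L')"
            "rad (S2 L') \<le> r * rad (S2 L)" by blast
        have "r * rad (S2 L') \<le> r * rad (S2 L)" using L'(4) b1 r by (simp add: mult_left_mono)
        then have "st2 z L'" unfolding st2_def using L' b1 S(4,5) by (simp add: c_def R1_def)
        moreover have "rad (S2 L') \<le> r^Suc n * R" using L'(4) b2 by linarith
        ultimately show ?case by blast
      next
        assume "\<exists>I' y. valid_word k1 I' \<and> y \<in> C2 \<and> N (y - fst (S1 I')) \<le> (1 - 2 * r) * rad (S1 I') \<and>
              rad (S1 I') \<le> r * rad (S2 L)"
        then obtain I' y where I': "valid_word k1 I'" "y \<in> C2" "N (y - fst (S1 I')) \<le> (1 - 2 * r) * rad (S1 I')"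
            "rad (S1 I') \<le> r * rad (S2 L)" by blast
        have "0 \<le> rad (S1 I')" by (rule sys_rad[OF sys1 I'(1)])
        then have "r * rad (S1 I') \<le> rad (S1 I')" using r1 r by (intro mult_left_le_one_le) auto
        then have "st1 y I'" unfolding st1_def using I' b1 S(4,5) by (simp add: c_def R1_def)
        moreover have "rad (S1 I') \<le> r^Suc n * R" using I'(4) b2 by linarith
        ultimately show ?case by blast
      qed
    next
      assume "\<exists>y I. st1 y I \<and> rad (S1 I) \<le> r^n * R"
      then obtain y I where st: "st1 y I" and bd: "rad (S1 I) \<le> r^n * R" by blast
      have pos: "0 < rad (S1 I)" using low1[OF st] t1(1) \<delta>(1) by (meson mult_pos_pos order_less_le_trans)
      have S: "valid_word k1 I" "y \<in> C2" "N (y - fst (S1 I)) \<le> (1 - 2*r) * rad (S1 I)"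
          "rad (S1 I) \<le> R1" "r * rad (S1 I) \<le> rad (S2 [])"
        using st unfolding st1_def c_def R2_def by auto
      have b1: "r * rad (S1 I) \<le> rad (S1 I)" using pos r1 by (simp add: mult_left_le_one_le)
      have b2: "r * rad (S1 I) \<le> r^Suc n * R" using bd r by simp
      from step[OF nrm cp1 cp2 ne1 ne2 sys1 sys2 ud1 r dichB S(1-3) pos S(5)]
      show ?case
      proof
        assume "\<exists>L' z. valid_word k1 L' \<and> z \<in> C2 \<and> N (z - fst (S1 L')) \<le> (1 - 2 * r) * rad (S1 L') \<and>
              rad (S1 L') \<le> r * rad (S1 I)"
        then obtain L' z where L': "valid_word k1 L'" "z \<in> C2" "N (z - fst (S1 L')) \<le> (1 - 2 * r) * rad (S1 L')"
            "rad (S1 L') \<le> r * rad (S1 I)" by blast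
        have "r * rad (S1 L') \<le> r * rad (S1 I)" using L'(4) b1 r by (simp add: mult_left_mono)
        then have "st1 z L'" unfolding st1_def using L' b1 S(4,5) by (simp add: c_def R2_def)
        moreover have "rad (S1 L') \<le> r^Suc n * R" using L'(4) b2 by linarith
        ultimately show ?case by blast
      next
        assume "\<exists>I' x. valid_word k2 I' \<and> x \<in> C1 \<and> N (x - fst (S2 I')) \<le> (1 - 2 * r) * rad (S2 I') \<and>
              rad (S2 I') \<le> r * rad (S1 I)"
        then obtain I' x where I': "valid_word k2 I'" "x \<in> C1" "N (x - fst (S2 I')) \<le> (1 - 2 * r) * rad (S2 I')"
            "rad (S2 I') \<le> r * rad (S1 I)" by blast
        have "0 \<le> rad (S2 I')" by (rule sys_rad[OF sys2 I'(1)])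
        then have "r * rad (S2 I') \<le> rad (S2 I')" using r1 r by (intro mult_left_le_one_le) auto
        then have "st2 x I'" unfolding st2_def using I' b1 S(4,5) by (simp add: c_def R2_def)
        moreover have "rad (S2 I') \<le> r^Suc n * R" using I'(4) b2 by linarith
        ultimately show ?case by blast
      qed
    qed
  qed
  define t where "t = min t1 t2"
  have t0: "t > 0" using t1(1) t2(1) by (simp add: t_def)
  have R0: "0 \<le> R" using sys_rad[OF sys2 valid_nil] by (simp add: R_def R2_def)
  obtain n where n: "r^n < t * \<delta> / (R + 1)"
    using real_arch_pow_inv[of "t * \<delta> / (R + 1)" r] t0 \<delta>(1) R0 r by auto
  have rn0: "0 \<le> r^n" using r by simp
  have "r^n * (R + 1) < t * \<delta>" using n R0 by (simp add: pos_less_divide_eq)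
  moreover have "r^n * R \<le> r^n * (R + 1)" using rn0 by (simp add: mult_left_mono)
  ultimately have small: "r^n * R < t * \<delta>" by linarith
  have tt1: "t * \<delta> \<le> t1 * \<delta>" "t * \<delta> \<le> t2 * \<delta>" using \<delta>(1) by (simp_all add: t_def mult_right_mono)
  from claim[of n] show False
  proof
    assume "\<exists>x L. st2 x L \<and> rad (S2 L) \<le> r^n * R"
    then obtain x L where "st2 x L" "rad (S2 L) \<le> r^n * R" by blast
    then show False using low2 small tt1 by fastforce
  next
    assume "\<exists>y I. st1 y I \<and> rad (S1 I) \<le> r^n * R"
    then obtain y I where "st1 y I" "rad (S1 I) \<le> r^n * R" by blast
    then show False using low1 small tt1 by fastforce
  qed
qed

end
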